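(* Let $q$ be a prime power, $\ell\ge1$, and let $\mathcal{A}$ be a central hyperplane arrangement in $\mathbb{F}_q^\ell$. If $\chi(\mathcal{A}, q^k)=0$ for some integer $k\geq 0$, then $\chi(\mathcal{A}, q^j)=0$ for all integers $j$ with $0\leq j\leq k$.
   Context: A (central) hyperplane arrangement $\mathcal{A}$ in a vector space $V$ over a field $\mathbb{K}$ is a finite set of linear subspaces of codimension one. $L(\mathcal{A})$ denotes the set of all intersections of subsets of $\mathcal{A}$ (including $V$ itself as the empty intersection), ordered by reverse inclusion, with minimal element $\hat 0=V$. The Möbius function $\mu:L(\mathcal{A})\to\mathbb{Z}$ is defined by $\mu(\hat0)=1$ and $\mu(X)=-\sum_{Y<X}\mu(Y)$ for $X>\hat 0$. The characteristic polynomial is $\chi(\mathcal{A},t)=\sum_{X\in L(\mathcal{A})}\mu(X)t^{\dim X}$. *)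

theory Defs
  imports "HOL-Analysis.Analysis"
begin

definition is_hyperplane :: "('a::field ^ 'n) set \<Rightarrow> bool" where
  "is_hyperplane H \<longleftrightarrow> vec.subspace H \<and> vec.dim H + 1 = vec.dim (UNIV :: ('a ^ 'n) set)"

definition central_arrangement :: "('a::field ^ 'n) set set \<Rightarrow> bool" where
  "central_arrangement A \<longleftrightarrow> finite A \<and> (\<forall>H\<in>A. is_hyperplane H)"

definition intersection_lattice :: "('a ^ 'n) set set \<Rightarrow> ('a ^ 'n) set set" where
  "intersection_lattice A = {\<Inter> B | B. B \<subseteq> A}"

text \<open>Moebius function of L(A) (ordered by reverse inclusion, bottom = V):
  mu(V) = 1, mu(X) = - sum of mu(Y) over Y in L(A) with Y < X, i.e. X proper subset of Y.\<close>
function mobius :: "('a::{finite,field} ^ 'n) set set \<Rightarrow> ('a ^ 'n) set \<Rightarrow> int" where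
  "mobius A X = (if X = UNIV then 1
     else - (\<Sum>Y \<in> {Y \<in> intersection_lattice A. X \<subset> Y}. mobius A Y))"
  by pat_completeness auto
termination
proof (relation "Wellfounded.measure (\<lambda>(A, X). card (UNIV - X))")
  show "wf (Wellfounded.measure (\<lambda>(A, X). card (UNIV - X)))" by simp
next
  fix A :: "('a::{finite,field} ^ 'n) set set" and X Y :: "('a ^ 'n) set"
  assume "X \<noteq> UNIV" "Y \<in> {Y \<in> intersection_lattice A. X \<subset> Y}"
  then have "UNIV - Y \<subset> UNIV - X" by auto
  then show "((A, Y), (A, X)) \<in> Wellfounded.measure (\<lambda>(A, X). card (UNIV - X))"
    by (simp add: psubset_card_mono)
qed

definition char_poly :: "('a::{finite,field} ^ 'n) set set \<Rightarrow> int \<Rightarrow> int" where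
  "char_poly A t = (\<Sum>X \<in> intersection_lattice A. mobius A X * t ^ vec.dim X)"

end

theory Submission
  imports Defs
begin

lemma card_subspace:
  fixes S :: "('a::{finite,field} ^ 'n) set"
  assumes "vec.subspace S"
  shows "card S = CARD('a) ^ vec.dim S"
proof -
  obtain B where B: "B \<subseteq> S" "vec.independent B" "S \<subseteq> vec.span B" "card B = vec.dim S"
    using vec.basis_exists by blast
  have fB: "finite B" by (rule finite_subset[of _ UNIV]) auto
  have spanB: "vec.span B = S"
    using B assms vec.span_minimal by blast
  define f where "f = (\<lambda>u :: 'a ^ 'n \<Rightarrow> 'a. (\<Sum>v\<in>B. u v *s v))"
  have rng: "range f = S" using vec.span_finite[OF fB] spanB unfolding f_def by simp
  have img: "f ` (PiE B (\<lambda>_. UNIV)) = range f"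
  proof
    show "range f \<subseteq> f ` (PiE B (\<lambda>_. UNIV))"
    proof
      fix y assume "y \<in> range f"
      then obtain u where y: "y = f u" by auto
      have "f (restrict u B) = f u" unfolding f_def by (rule sum.cong) auto
      moreover have "restrict u B \<in> PiE B (\<lambda>_. UNIV)" by simp
      ultimately show "y \<in> f ` (PiE B (\<lambda>_. UNIV))" using y by (metis image_eqI)
    qed
  qed auto
  have nd: "\<not> (\<exists>u. (\<exists>v\<in>B. u v \<noteq> 0) \<and> (\<Sum>v\<in>B. u v *s v) = 0)"
    using vec.dependent_finite[OF fB] B(2) by simp
  have inj: "inj_on f (PiE B (\<lambda>_. UNIV))"
  proof
    fix u w assume u: "u \<in> PiE B (\<lambda>_. UNIV)" and w: "w \<in> PiE B (\<lambda>_. UNIV)" and e: "f u = f w"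
    have "(\<Sum>v\<in>B. (u v - w v) *s v) = f u - f w"
      unfolding f_def by (simp add: vec.scale_left_diff_distrib sum_subtractf)
    also have "\<dots> = 0" using e by simp
    finally have "\<forall>v\<in>B. u v - w v = 0"
      using spec[OF nd[unfolded not_ex], of "\<lambda>v. u v - w v"] by blast
    then show "u = w" using u w by (intro PiE_ext) auto
  qed
  have "card S = card (PiE B (\<lambda>_. (UNIV :: 'a set)))"
    using card_image[OF inj] img rng by simp
  also have "\<dots> = CARD('a) ^ card B" by (simp add: card_PiE fB)
  finally show ?thesis using B(4) by simp
qed

lemma hyp_not_univ:
  assumes "is_hyperplane H" shows "H \<noteq> UNIV"
  using assms unfolding is_hyperplane_def by auto

lemma mobius_zero:
  fixes A :: "('a::{finite,field} ^ 'n) set set"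
  assumes "X \<noteq> UNIV" "X \<in> intersection_lattice A"
  shows "(\<Sum>Y\<in>{Y \<in> intersection_lattice A. X \<subseteq> Y}. mobius A Y) = 0"
proof -
  have eq: "{Y \<in> intersection_lattice A. X \<subseteq> Y} = insert X {Y \<in> intersection_lattice A. X \<subset> Y}"
    using assms(2) by auto
  have "mobius A X = - (\<Sum>Y \<in> {Y \<in> intersection_lattice A. X \<subset> Y}. mobius A Y)"
    using assms(1) by (subst mobius.simps) simp
  then show ?thesis unfolding eq by (subst sum.insert) auto
qed

definition goodset :: "('a::{finite,field} ^ 'n) set set \<Rightarrow> nat \<Rightarrow> (nat \<Rightarrow> 'a ^ 'n) set" where
  "goodset A k = {v \<in> PiE {..<k} (\<lambda>_. UNIV). \<forall>H\<in>A. \<exists>i<k. v i \<notin> H}"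

lemma inner_sum:
  fixes A :: "('a::{finite,field} ^ 'n) set set"
  assumes "central_arrangement A"
  shows "(\<Sum>X\<in>{X \<in> intersection_lattice A. \<forall>i<k. v i \<in> X}. mobius A X)
         = (if \<forall>H\<in>A. \<exists>i<k. v i \<notin> H then 1 else 0)"
proof -
  define S where "S = {H\<in>A. \<forall>i<k. v i \<in> H}"
  define c where "c = \<Inter> S"
  have cL: "c \<in> intersection_lattice A" unfolding c_def S_def intersection_lattice_def by blast
  have eq: "{X \<in> intersection_lattice A. \<forall>i<k. v i \<in> X} = {X \<in> intersection_lattice A. c \<subseteq> X}"
  proof (intro Collect_cong conj_cong refl iffI)
    fix X assume XL: "X \<in> intersection_lattice A" and vi: "\<forall>i<k. v i \<in> X"
    then obtain B where B: "B \<subseteq> A" "X = \<Inter> B" unfolding intersection_lattice_def by blast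
    then have "B \<subseteq> S" using vi unfolding S_def by blast
    then show "c \<subseteq> X" unfolding c_def B(2) by blast
  next
    fix X assume "c \<subseteq> X"
    moreover have "\<forall>i<k. v i \<in> c" unfolding c_def S_def by blast
    ultimately show "\<forall>i<k. v i \<in> X" by blast
  qed
  show ?thesis
  proof (cases "\<forall>H\<in>A. \<exists>i<k. v i \<notin> H")
    case True
    then have "S = {}" unfolding S_def by blast
    then have "c = UNIV" unfolding c_def by simp
    then have "{X \<in> intersection_lattice A. c \<subseteq> X} = {UNIV}" using cL by auto
    then show ?thesis using True eq by (simp add: mobius.simps)
  next
    case False
    then obtain H where H: "H \<in> S" unfolding S_def by blast
    then have "c \<subseteq> H" unfolding c_def by blast
    moreover have "H \<noteq> UNIV" using H assms hyp_not_univ unfolding S_def central_arrangement_def by blast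
    ultimately have "c \<noteq> UNIV" by blast
    then show ?thesis using False eq mobius_zero[OF _ cL] by simp
  qed
qed

lemma char_poly_count:
  fixes A :: "('a::{finite,field} ^ 'n) set set"
  assumes "central_arrangement A"
  shows "char_poly A (int CARD('a) ^ k) = int (card (goodset A k))"
proof -
  define P where "P = PiE {..<k} (\<lambda>_. (UNIV :: ('a ^ 'n) set))"
  have sub: "\<And>X. X \<in> intersection_lattice A \<Longrightarrow> vec.subspace X"
  proof -
    fix X assume "X \<in> intersection_lattice A"
    then obtain B where B: "B \<subseteq> A" "X = \<Inter> B" unfolding intersection_lattice_def by blast
    have "\<forall>H\<in>B. vec.subspace H" using B(1) assms
      unfolding central_arrangement_def is_hyperplane_def by blast
    then show "vec.subspace X" unfolding B(2) by (simp add: vec.subspace_Inter)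
  qed
  have pe: "PiE {..<k} (\<lambda>_. X) = {v \<in> P. \<forall>i<k. v i \<in> X}" for X :: "('a ^ 'n) set"
    unfolding P_def by (auto simp: PiE_def Pi_def)
  have "char_poly A (int CARD('a) ^ k) =
      (\<Sum>X\<in>intersection_lattice A. mobius A X * int (card (PiE {..<k} (\<lambda>_. X))))"
    unfolding char_poly_def
  proof (rule sum.cong[OF refl])
    fix X assume "X \<in> intersection_lattice A"
    then have "card X = CARD('a) ^ vec.dim X" using card_subspace sub by blast
    then have "card (PiE {..<k} (\<lambda>_. X)) = (CARD('a) ^ k) ^ vec.dim X"
      by (simp add: card_PiE power_mult[symmetric] mult.commute)
    then show "mobius A X * (int CARD('a) ^ k) ^ vec.dim X = mobius A X * int (card (PiE {..<k} (\<lambda>_. X)))"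
      by simp
  qed
  also have "\<dots> = (\<Sum>X\<in>intersection_lattice A. \<Sum>v\<in>{v \<in> P. \<forall>i<k. v i \<in> X}. mobius A X)"
    by (simp add: pe mult.commute del: mobius.simps)
  also have "\<dots> = (\<Sum>v\<in>P. \<Sum>X\<in>{X \<in> intersection_lattice A. \<forall>i<k. v i \<in> X}. mobius A X)"
    by (rule sum.swap_restrict) (auto simp: P_def intro: finite_PiE)
  also have "\<dots> = (\<Sum>v\<in>P. if \<forall>H\<in>A. \<exists>i<k. v i \<notin> H then 1 else 0)"
    by (intro sum.cong refl inner_sum[OF assms])
  also have "\<dots> = int (card (goodset A k))"
  proof -
    have fP: "finite P" unfolding P_def by (intro finite_PiE) auto
    have "int (card (goodset A k)) = (\<Sum>v\<in>{v\<in>P. \<forall>H\<in>A. \<exists>i<k. v i \<notin> H}. 1)"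
      unfolding goodset_def P_def by simp
    also have "\<dots> = (\<Sum>v\<in>P. if \<forall>H\<in>A. \<exists>i<k. v i \<notin> H then 1 else 0)"
      by (rule sum.inter_filter[OF fP])
    finally show ?thesis by simp
  qed
  finally show ?thesis .
qed

theorem mainTheorem2:
  fixes A :: "('a::{finite,field} ^ 'n) set set" and k :: nat
  assumes "central_arrangement A"
    and "char_poly A (int CARD('a) ^ k) = 0"
  shows "\<forall>j::nat. j \<le> k \<longrightarrow> char_poly A (int CARD('a) ^ j) = 0"
proof (intro allI impI)
  fix j :: nat assume jk: "j \<le> k"
  have "card (goodset A k) = 0" using assms char_poly_count by fastforce
  moreover have "finite (goodset A k)"
    by (rule finite_subset[of _ "PiE {..<k} (\<lambda>_. UNIV)"]) (auto simp: goodset_def intro: finite_PiE)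
  ultimately have ek: "goodset A k = {}" by simp
  have "goodset A j = {}"
  proof (rule ccontr)
    assume "goodset A j \<noteq> {}"
    then obtain v where v: "v \<in> goodset A j" by blast
    define w where "w = (\<lambda>i. if i < j then v i else if i < k then 0 else undefined)"
    have "w \<in> goodset A k"
      unfolding goodset_def
    proof (intro CollectI conjI ballI)
      show "w \<in> PiE {..<k} (\<lambda>_. UNIV)" unfolding w_def using jk v
        by (auto simp: goodset_def PiE_def extensional_def)
    next
      fix H assume "H \<in> A"
      then obtain i where "i < j" "v i \<notin> H" using v unfolding goodset_def by blast
      then show "\<exists>i<k. w i \<notin> H" using jk unfolding w_def by (intro exI[of _ i]) auto
    qed
    then show False using ek by blast
  qed
  then show "char_poly A (int CARD('a) ^ j) = 0" using char_poly_count[OF assms(1)] by simp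
qed

end
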